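(* Let $n,m\ge1$, $\vec x,\vec y\in\hat N^n$ and $\vec a,\vec b\in\hat N^m$. Then, for the componentwise order, (i) $\vec x\tilde\ltimes\vec a<\vec x\tilde\ltimes\vec b$ if and only if $\vec a<\vec b$; (ii) $\vec x\tilde\ltimes\vec a<\vec y\tilde\ltimes\vec a$ if and only if $\vec x<\vec y$.
   Context: $\hat N^n$ ($n\ge1$) is the set of names of planar rooted binary trees with $n$ internal vertices and $\hat N^0=\{()\}$; recursively, every element of $\hat N^n$, $n\ge1$, is uniquely $\vec v_l\vee\vec v_r:=(\vec v_l,1,p+1+\vec v_r)$ with $\vec v_l\in\hat N^p,\vec v_r\in\hat N^q$, $p+q+1=n$, where $k+(w_1,\dots,w_q)=(w_1+k,\dots,w_q+k)$. For $\vec v\in\hat N^n,\vec w\in\hat N^m$: $\vec v\nearrow\vec w=(\vec v,n\triangleright w_1,\dots,n\triangleright w_m)$ with $n\triangleright a=a+n$ for $a\neq1$, $n\triangleright1=1$; $\vec v\nwarrow\vec w=(\vec v,n+\vec w)$; $()$ is a two-sided unit for both. $\varpi_{()}(\vec x)=()$ and $\varpi_{\vec v}(\vec x)=\varpi_{\vec v_l}(\vec x)\nearrow\vec x\nwarrow\varpi_{\vec v_r}(\vec x)$ for $\vec v=\vec v_l\vee\vec v_r$; $\vec u\tilde\ltimes\vec v:=\varpi_{\vec u}(\vec v)\in\hat N^{nm}$. The order is componentwise: $\vec v\le\vec w$ iff $v_i\le w_i$ for all $i$, and $<$ means $\le$ and $\ne$. *)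

theory Defs
  imports Main
begin

text \<open>Names of planar rooted binary trees, as lists of naturals.
  The join: vl \<or> vr = (vl, 1, p+1+vr) where p = length vl.\<close>

definition join :: "nat list \<Rightarrow> nat list \<Rightarrow> nat list" where
  "join vl vr = vl @ [1] @ map (\<lambda>w. w + (length vl + 1)) vr"

text \<open>Nhat n: the names with n internal vertices, defined recursively as in the paper.\<close>
inductive is_name :: "nat \<Rightarrow> nat list \<Rightarrow> bool" where
  name_leaf: "is_name 0 []"
| name_join: "\<lbrakk> is_name p vl; is_name q vr \<rbrakk> \<Longrightarrow> is_name (p + q + 1) (join vl vr)"

definition Nhat :: "nat \<Rightarrow> nat list set" where
  "Nhat n = {v. is_name n v}"

text \<open>Planar binary tree skeletons; a name is uniquely the name of such a tree.\<close>
datatype btree = Leaf | Node btree btree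

fun tname :: "btree \<Rightarrow> nat list" where
  "tname Leaf = []"
| "tname (Node l r) = join (tname l) (tname r)"

definition tri :: "nat \<Rightarrow> nat \<Rightarrow> nat" where
  "tri n a = (if a = 1 then 1 else a + n)"

definition nearrow :: "nat list \<Rightarrow> nat list \<Rightarrow> nat list" where
  "nearrow v w = v @ map (tri (length v)) w"

definition nwarrow :: "nat list \<Rightarrow> nat list \<Rightarrow> nat list" where
  "nwarrow v w = v @ map (\<lambda>a. a + length v) w"

fun varpi_t :: "btree \<Rightarrow> nat list \<Rightarrow> nat list" where
  "varpi_t Leaf x = []"
| "varpi_t (Node l r) x = nwarrow (nearrow (varpi_t l x) x) (varpi_t r x)"

definition varpi :: "nat list \<Rightarrow> nat list \<Rightarrow> nat list" where
  "varpi v x = varpi_t (THE t. tname t = v) x"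

definition tltimes :: "nat list \<Rightarrow> nat list \<Rightarrow> nat list" where
  "tltimes u v = varpi u v"

definition cw_le :: "nat list \<Rightarrow> nat list \<Rightarrow> bool" where
  "cw_le v w \<longleftrightarrow> length v = length w \<and> (\<forall>i<length v. v ! i \<le> w ! i)"

definition cw_less :: "nat list \<Rightarrow> nat list \<Rightarrow> bool" where
  "cw_less v w \<longleftrightarrow> cw_le v w \<and> v \<noteq> w"

end

theory Submission
  imports Defs
begin

fun ok :: "nat \<Rightarrow> nat list \<Rightarrow> bool" where
  "ok k [] = True"
| "ok k (x#xs) = (1 \<le> x \<and> x \<le> k+1 \<and> ok (k+1) xs)"

lemma ok_append: "ok k (xs@ys) = (ok k xs \<and> ok (k + length xs) ys)"
  by (induction xs arbitrary: k) auto

lemma ok_shift: "ok k xs \<Longrightarrow> ok (k+c) (map (\<lambda>w. w + c) xs)"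
  by (induction xs arbitrary: k) (simp_all, metis add_Suc)

lemma ok_mono: "ok k xs \<Longrightarrow> k \<le> k' \<Longrightarrow> ok k' xs"
  by (induction xs arbitrary: k k') auto

lemma ok_ge1: "ok k xs \<Longrightarrow> e \<in> set xs \<Longrightarrow> 1 \<le> e"
  by (induction xs arbitrary: k) auto

lemma ok_tname: "ok 0 (tname t)"
proof (induction t)
  case Leaf then show ?case by simp
next
  case (Node l r)
  have "ok (length (tname l) + 1) (map (\<lambda>w. w + (length (tname l) + 1)) (tname r))"
    using ok_shift[OF Node.IH(2), of "length (tname l) + 1"] by simp
  then show ?case using Node.IH(1) by (simp add: join_def ok_append)
qed

lemma last1: "xs @ 1 # ys = xs' @ 1 # ys' \<Longrightarrow> (1::nat) \<notin> set ys \<Longrightarrow> 1 \<notin> set ys'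
   \<Longrightarrow> xs = xs' \<and> ys = ys'"
proof (induction xs arbitrary: xs')
  case Nil
  then show ?case by (cases xs') auto
next
  case (Cons a xs)
  then show ?case by (cases xs') auto
qed

lemma tname_inj: "tname t = tname t' \<Longrightarrow> t = t'"
proof (induction t arbitrary: t')
  case Leaf then show ?case by (cases t') (auto simp: join_def)
next
  case (Node l r)
  show ?case
  proof (cases t')
    case Leaf then show ?thesis using Node by (auto simp: join_def)
  next
    case (Node l' r')
    have g1: "1 \<notin> set (map (\<lambda>w. w + (length (tname l) + 1)) (tname r))"
      using ok_ge1[OF ok_tname[of r]] by fastforce
    have g2: "1 \<notin> set (map (\<lambda>w. w + (length (tname l') + 1)) (tname r'))"
      using ok_ge1[OF ok_tname[of r']] by fastforce
    from Node.prems Node have "tname l @ 1 # map (\<lambda>w. w + (length (tname l) + 1)) (tname r)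
       = tname l' @ 1 # map (\<lambda>w. w + (length (tname l') + 1)) (tname r')"
      by (simp add: join_def)
    from last1[OF this g1 g2] have "tname l = tname l'" and
      "map (\<lambda>w. w + (length (tname l) + 1)) (tname r) = map (\<lambda>w. w + (length (tname l) + 1)) (tname r')"
      by auto
    moreover have "inj (\<lambda>w::nat. w + (length (tname l) + 1))" by (auto simp: inj_def)
    ultimately have "tname l = tname l'" "tname r = tname r'"
      by (auto dest: inj_map_eq_map[THEN iffD1, rotated])
    then show ?thesis using Node.IH Node by auto
  qed
qed

lemma name_tree: "is_name n v \<Longrightarrow> \<exists>t. tname t = v \<and> length v = n"
proof (induction rule: is_name.induct)
  case name_leaf then show ?case by (auto intro: exI[of _ Leaf])
next
  case (name_join p vl q vr)
  then obtain tl tr where "tname tl = vl" "length vl = p" "tname tr = vr" "length vr = q" by blast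
  then show ?case by (auto simp: join_def intro!: exI[of _ "Node tl tr"])
qed

definition blk :: "nat \<Rightarrow> nat \<Rightarrow> nat \<Rightarrow> nat list \<Rightarrow> nat list" where
  "blk m k x a = map (\<lambda>e. if e = 1 then 1 + m*(x-1) else e + m*k) a"

fun B :: "nat \<Rightarrow> nat \<Rightarrow> nat list \<Rightarrow> nat list \<Rightarrow> nat list" where
  "B m k [] a = []"
| "B m k (x#xs) a = blk m k x a @ B m (k+1) xs a"

lemma B_append: "B m k (xs@ys) a = B m k xs a @ B m (k + length xs) ys a"
  by (induction xs arbitrary: k) auto

lemma B_length: "length (B m k xs a) = length xs * length a"
  by (induction xs arbitrary: k) (auto simp: blk_def)

lemma B_shift: "(\<forall>e\<in>set xs. 1 \<le> e) \<Longrightarrow>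
   map (\<lambda>e. e + c*m) (B m k xs a) = B m (k+c) (map (\<lambda>w. w + c) xs) a"
proof (induction xs arbitrary: k)
  case Nil then show ?case by simp
next
  case (Cons x xs)
  have "map (\<lambda>e. e + c*m) (blk m k x a) = blk m (k+c) (x+c) a"
    using Cons.prems by (auto simp: blk_def algebra_simps)
  then show ?case using Cons by simp
qed

lemma varpi_B: "varpi_t t a = B (length a) 0 (tname t) a"
proof (induction t)
  case Leaf then show ?case by simp
next
  case (Node l r)
  let ?m = "length a" and ?p = "length (tname l)"
  have ne: "nearrow (varpi_t l a) a = B ?m 0 (tname l) a @ blk ?m ?p 1 a"
    using Node.IH(1) by (auto simp: nearrow_def B_length blk_def tri_def mult.commute)
  have "map (\<lambda>e. e + (?p+1)*?m) (B ?m 0 (tname r) a)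
      = B ?m (?p+1) (map (\<lambda>w. w + (?p+1)) (tname r)) a"
    using B_shift[of "tname r" "?p+1" ?m 0 a] ok_ge1[OF ok_tname[of r]] by simp
  then have "varpi_t (Node l r) a = B ?m 0 (tname l) a @ blk ?m ?p 1 a @
       B ?m (?p+1) (map (\<lambda>w. w + (?p+1)) (tname r)) a"
    using Node.IH(2) ne by (simp add: nwarrow_def B_length blk_def algebra_simps)
  then show ?case by (simp add: join_def B_append)
qed

lemma tltimes_B: "is_name n x \<Longrightarrow> tltimes x a = B (length a) 0 x a"
proof -
  assume "is_name n x"
  then obtain t where t: "tname t = x" using name_tree by blast
  have "(THE t. tname t = x) = t" using t tname_inj by blast
  then show ?thesis by (simp add: tltimes_def varpi_def varpi_B t)
qed

lemma blk_mono:
  assumes "1 \<le> x" "x \<le> k+1" "\<forall>e\<in>set a. 1 \<le> e" "\<forall>e\<in>set b. 1 \<le> e"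
    "list_all2 (\<le>) a b"
  shows "list_all2 (\<le>) (blk m k x a) (blk m k x b)"
proof -
  have mk: "m*(x-1) \<le> m*k" using assms(2) by (intro mult_le_mono2) simp
  have key: "\<And>e f. 1 \<le> e \<Longrightarrow> 1 \<le> f \<Longrightarrow> e \<le> f \<Longrightarrow>
     (if e = 1 then 1 + m*(x-1) else e + m*k) \<le> (if f = 1 then 1 + m*(x-1) else f + m*k)"
  proof -
    fix e f :: nat assume "1 \<le> e" "1 \<le> f" "e \<le> f"
    then show "(if e = 1 then 1 + m*(x-1) else e + m*k) \<le> (if f = 1 then 1 + m*(x-1) else f + m*k)"
      using mk by (cases "e = 1"; cases "f = 1") (simp_all only: if_True if_False simp_thms; linarith)+
  qed
  have len: "length a = length b" using assms(5) by (rule list_all2_lengthD)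
  show ?thesis unfolding blk_def list_all2_conv_all_nth
  proof (intro conjI allI impI)
    show "length (map (\<lambda>e. if e = 1 then 1 + m * (x - 1) else e + m * k) a) =
      length (map (\<lambda>e. if e = 1 then 1 + m * (x - 1) else e + m * k) b)" using len by simp
    fix i assume i: "i < length (map (\<lambda>e. if e = 1 then 1 + m * (x - 1) else e + m * k) a)"
    then have ia: "i < length a" and ib: "i < length b" using len by auto
    have "a ! i \<le> b ! i" using assms(5) ia by (simp add: list_all2_conv_all_nth)
    moreover have "1 \<le> a ! i" "1 \<le> b ! i" using assms(3,4) ia ib nth_mem by blast+
    ultimately show "map (\<lambda>e. if e = 1 then 1 + m * (x - 1) else e + m * k) a ! i
         \<le> map (\<lambda>e. if e = 1 then 1 + m * (x - 1) else e + m * k) b ! i"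
      using key ia ib by simp
  qed
qed

lemma B_mono: "ok k xs \<Longrightarrow> \<forall>e\<in>set a. 1 \<le> e \<Longrightarrow> \<forall>e\<in>set b. 1 \<le> e \<Longrightarrow>
   list_all2 (\<le>) a b \<Longrightarrow> list_all2 (\<le>) (B m k xs a) (B m k xs b)"
proof (induction xs arbitrary: k)
  case Nil then show ?case by simp
next
  case (Cons x xs)
  have "list_all2 (\<le>) (blk m k x a) (blk m k x b)"
    using Cons.prems by (intro blk_mono) auto
  moreover have "list_all2 (\<le>) (B m (k+1) xs a) (B m (k+1) xs b)"
    using Cons by simp
  ultimately show ?case by (simp only: B.simps list_all2_appendI)
qed

lemma blk_le:
  assumes "1 \<le> x" "1 \<le> y" "m \<ge> 1"
  shows "list_all2 (\<le>) (blk m k x (1#a')) (blk m k y (1#a')) \<longleftrightarrow> x \<le> y"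
proof
  assume "list_all2 (\<le>) (blk m k x (1#a')) (blk m k y (1#a'))"
  then have "1 + m*(x-1) \<le> 1 + m*(y-1)" by (simp add: blk_def)
  then have "x - 1 \<le> y - 1" using assms(3) by simp
  then show "x \<le> y" using assms by simp
next
  assume "x \<le> y"
  then have "m*(x-1) \<le> m*(y-1)" by (intro mult_le_mono2 diff_le_mono)
  then show "list_all2 (\<le>) (blk m k x (1#a')) (blk m k y (1#a'))"
    unfolding blk_def list_all2_map1 list_all2_map2
    by (auto intro!: list_all2_refl)
qed

lemma B_le: "ok k xs \<Longrightarrow> ok k ys \<Longrightarrow> length xs = length ys \<Longrightarrow> m \<ge> 1 \<Longrightarrow>
   list_all2 (\<le>) (B m k xs (1#a')) (B m k ys (1#a')) \<longleftrightarrow> list_all2 (\<le>) xs ys"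
proof (induction xs arbitrary: ys k)
  case Nil then show ?case by simp
next
  case (Cons x xs)
  then obtain y ys' where ys: "ys = y # ys'" by (cases ys) auto
  have l: "length (blk m k x (1#a')) = length (blk m k y (1#a'))" by (simp add: blk_def)
  have "list_all2 (\<le>) (B m k (x#xs) (1#a')) (B m k ys (1#a')) \<longleftrightarrow>
    list_all2 (\<le>) (blk m k x (1#a')) (blk m k y (1#a')) \<and>
    list_all2 (\<le>) (B m (k+1) xs (1#a')) (B m (k+1) ys' (1#a'))"
    unfolding ys B.simps using list_all2_append[OF l] by blast
  also have "\<dots> \<longleftrightarrow> x \<le> y \<and> list_all2 (\<le>) xs ys'"
    using Cons ys blk_le[of x y m k a'] by simp
  finally show ?case using ys by simp
qed

lemma cw_le_conv: "cw_le v w \<longleftrightarrow> list_all2 (\<le>) v w"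
  by (auto simp: cw_le_def list_all2_conv_all_nth)

lemma la2_antisym: "list_all2 (\<le>) v w \<Longrightarrow> list_all2 (\<le>) w v \<Longrightarrow> v = (w::nat list)"
  by (auto simp: list_all2_conv_all_nth intro!: nth_equalityI intro: order.antisym)

lemma eq_conv: "(v::nat list) = w \<longleftrightarrow> list_all2 (\<le>) v w \<and> list_all2 (\<le>) w v"
  by (auto intro: la2_antisym list_all2_refl)

lemma name_facts: "is_name n v \<Longrightarrow> length v = n \<and> ok 0 v"
  using name_tree ok_tname by blast

theorem mainTheorem9:
  fixes n m :: nat and x y a b :: "nat list"
  assumes "n \<ge> 1" and "m \<ge> 1"
    and "x \<in> Nhat n" and "y \<in> Nhat n" and "a \<in> Nhat m" and "b \<in> Nhat m"
  shows "(cw_less (tltimes x a) (tltimes x b) \<longleftrightarrow> cw_less a b)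
       \<and> (cw_less (tltimes x a) (tltimes y a) \<longleftrightarrow> cw_less x y)"
proof -
  have nx: "is_name n x" and ny: "is_name n y" and na: "is_name m a" and nb: "is_name m b"
    using assms by (auto simp: Nhat_def)
  note fx = name_facts[OF nx] and fy = name_facts[OF ny] and fa = name_facts[OF na]
    and fb = name_facts[OF nb]
  obtain x' where x': "x = 1 # x'" using fx assms(1) by (cases x) auto
  obtain a' where a': "a = 1 # a'" using fa assms(2) by (cases a) auto
  have ga: "\<forall>e\<in>set a. 1 \<le> e" using fa ok_ge1 by blast
  have gb: "\<forall>e\<in>set b. 1 \<le> e" using fb ok_ge1 by blast
  have okx': "ok 1 x'" using fx x' by simp
  have blk0: "\<And>c. blk m 0 1 c = c" by (simp add: blk_def map_idI)
  have TA: "tltimes x a = a @ B m 1 x' a" using tltimes_B[OF nx, of a] fa x' blk0 by simp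
  have TB: "tltimes x b = b @ B m 1 x' b" using tltimes_B[OF nx, of b] fb x' blk0 by simp
  have leab: "\<And>c d. c \<in> {a,b} \<Longrightarrow> d \<in> {a,b} \<Longrightarrow>
      list_all2 (\<le>) (tltimes x c) (tltimes x d) \<longleftrightarrow> list_all2 (\<le>) c d"
  proof -
    fix c d assume c: "c \<in> {a,b}" and d: "d \<in> {a,b}"
    have lc: "length c = m" "length d = m" using c d fa fb by auto
    have gc: "\<forall>e\<in>set c. 1 \<le> e" "\<forall>e\<in>set d. 1 \<le> e" using c d ga gb by auto
    have T: "tltimes x c = c @ B m 1 x' c" "tltimes x d = d @ B m 1 x' d"
      using c d TA TB by auto
    show "list_all2 (\<le>) (tltimes x c) (tltimes x d) \<longleftrightarrow> list_all2 (\<le>) c d"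
      unfolding T using lc B_mono[OF okx' gc, of m]
      by (auto simp: list_all2_append)
  qed
  have i: "cw_less (tltimes x a) (tltimes x b) \<longleftrightarrow> cw_less a b"
    unfolding cw_less_def cw_le_conv eq_conv using leab by auto
  have lexy: "\<And>u v. u \<in> {x,y} \<Longrightarrow> v \<in> {x,y} \<Longrightarrow>
      list_all2 (\<le>) (tltimes u a) (tltimes v a) \<longleftrightarrow> list_all2 (\<le>) u v"
  proof -
    fix u v assume u: "u \<in> {x,y}" and v: "v \<in> {x,y}"
    have "tltimes u a = B m 0 u (1#a')" "tltimes v a = B m 0 v (1#a')"
      using u v tltimes_B[OF nx] tltimes_B[OF ny] fa a' by auto
    moreover have "ok 0 u" "ok 0 v" "length u = length v" using u v fx fy by auto
    ultimately show "list_all2 (\<le>) (tltimes u a) (tltimes v a) \<longleftrightarrow> list_all2 (\<le>) u v"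
      using B_le assms(2) by simp
  qed
  have ii: "cw_less (tltimes x a) (tltimes y a) \<longleftrightarrow> cw_less x y"
    unfolding cw_less_def cw_le_conv eq_conv using lexy by auto
  show ?thesis using i ii by simp
qed

end
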